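(* Assume the setting and Assumptions A1 and A2 described in the context. Then for every $\beta\in[0,1/2)$, \[ \sum_{k\ge1}k^{-1/2}D_\beta(\theta_k,\theta_{k-1})V^\beta(X_k)<\infty\qquad\mathbb P\text{-a.s.} \]
   Context: Setting: $(\mathsf X,\mathcal X)$ is a measurable space with countably generated $\sigma$-field, $(\Theta,\mathcal T)$ a measurable space, $\pi$ a probability measure on $(\mathsf X,\mathcal X)$, and $\{P_\theta,\theta\in\Theta\}$ a family of Markov transition kernels on $\mathsf X$ such that $\theta\mapsto P_\theta(x,A)$ is measurable for every $(x,A)$ and each $P_\theta$ admits $\pi$ as invariant distribution. Let $\bar\mu$ be a probability measure on $\mathsf X\times\Theta$ and $\{(X_n,\theta_n),n\ge0\}$ a process with law $\mathbb P$ (expectation $\mathbb E$) and natural filtration $\mathcal F_n$, such that $(X_0,\theta_0)\sim\bar\mu$ and for every $n\ge0$ and nonnegative measurable $f$, $\mathbb E(f(X_{n+1})\mid\mathcal F_n)=P_{\theta_n}f(X_n)$ a.s. Notation: $Qf(x)=\int Q(x,dy)f(y)$; for $W:\mathsf X\to[1,\infty)$, $|f|_W=\sup_{\mathsf X}|f|/W$, and $\|\mu\|_W=\sup_{|g|_W\le1}|\mu(g)|$. For $\beta\in[0,1]$, $D_\beta(\theta,\theta')=\sup_{|f|_{V^\beta}\le1}\sup_{x}|P_\theta f(x)-P_{\theta'}f(x)|/V^\beta(x)$. Assumption A1: each $P_\theta$ is phi-irreducible and aperiodic with invariant distribution $\pi$; there is a measurable $V:\mathsf X\to[1,\infty)$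 with $\int V(x)\bar\mu(dx,d\theta)<\infty$ such that for every $\beta\in(0,1]$ there exist $\rho\in(0,1)$, $C<\infty$ with $\|P_\theta^n(x,\cdot)-\pi\|_{V^\beta}\le C\rho^nV^\beta(x)$ for all $(x,\theta)$, $n\ge0$; and there exist $b<\infty$, $\lambda\in(0,1)$ with $P_\theta V(x)\le\lambda V(x)+b$ for all $(x,\theta)$. Assumption A2: there exist $\eta\in[0,1/2)$ and a nonincreasing sequence of positive numbers $\{\gamma_n,n\ge1\}$ with $\gamma_n=O(n^{-\alpha})$ for some $\alpha>1/2$, such that for every $\beta\in[0,1]$ there is a finite constant $C$ with $D_\beta(\theta_{n-1},\theta_n)\le C\gamma_nV^\eta(X_n)$ $\mathbb P$-a.s. for all $n\ge1$. *)

theory Defs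
  imports "HOL-Probability.Probability" "HOL-Library.Landau_Symbols"
begin

definition countably_generated :: "'a measure \<Rightarrow> bool" where
  "countably_generated M \<longleftrightarrow>
     (\<exists>G. countable G \<and> G \<subseteq> Pow (space M) \<and> sets M = sigma_sets (space M) G)"

definition markov_kernel :: "'a measure \<Rightarrow> ('a \<Rightarrow> 'a measure) \<Rightarrow> bool" where
  "markov_kernel M K \<longleftrightarrow> K \<in> M \<rightarrow>\<^sub>M prob_algebra M"

fun kpow :: "'a measure \<Rightarrow> ('a \<Rightarrow> 'a measure) \<Rightarrow> nat \<Rightarrow> 'a \<Rightarrow> 'a measure" where
  "kpow M K 0 x = return M x"
| "kpow M K (Suc n) x = kpow M K n x \<bind> K"

definition phi_irreducible :: "'a measure \<Rightarrow> ('a \<Rightarrow> 'a measure) \<Rightarrow> bool" where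
  "phi_irreducible M K \<longleftrightarrow>
     (\<exists>\<phi>. sets \<phi> = sets M \<and> sigma_finite_measure \<phi> \<and> emeasure \<phi> (space M) > 0 \<and>
        (\<forall>A\<in>sets M. emeasure \<phi> A > 0 \<longrightarrow>
           (\<forall>x\<in>space M. \<exists>n\<ge>1. emeasure (kpow M K n x) A > 0)))"

text \<open>Aperiodicity: there is no d-cycle with d >= 2, i.e. no family of d disjoint nonempty
  measurable sets D_0,...,D_{d-1} with K(x, D_{(i+1) mod d}) = 1 for all x in D_i.
  (For a phi-irreducible chain the union of such a cycle is absorbing, hence its complement
  is null for the maximal irreducibility measure; so this is the usual notion of period 1.)\<close>
definition aperiodic :: "'a measure \<Rightarrow> ('a \<Rightarrow> 'a measure) \<Rightarrow> bool" where
  "aperiodic M K \<longleftrightarrow>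
     \<not> (\<exists>d::nat. \<exists>D::nat \<Rightarrow> 'a set. d \<ge> 2 \<and>
          (\<forall>i<d. D i \<in> sets M \<and> D i \<noteq> {}) \<and>
          (\<forall>i<d. \<forall>j<d. i \<noteq> j \<longrightarrow> D i \<inter> D j = {}) \<and>
          (\<forall>i<d. \<forall>x\<in>D i. emeasure (K x) (D ((i + 1) mod d)) = 1))"

definition wnorm_diff :: "'a measure \<Rightarrow> ('a \<Rightarrow> real) \<Rightarrow> 'a measure \<Rightarrow> 'a measure \<Rightarrow> ennreal" where
  "wnorm_diff M W \<mu> \<nu> =
     (SUP g\<in>{g \<in> borel_measurable M. \<forall>x\<in>space M. \<bar>g x\<bar> \<le> W x}.
        ennreal \<bar>(\<integral>y. g y \<partial>\<mu>) - (\<integral>y. g y \<partial>\<nu>)\<bar>)"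

definition Dbeta :: "'x measure \<Rightarrow> ('t \<Rightarrow> 'x \<Rightarrow> 'x measure) \<Rightarrow> ('x \<Rightarrow> real) \<Rightarrow> real
                     \<Rightarrow> 't \<Rightarrow> 't \<Rightarrow> ennreal" where
  "Dbeta M P V \<beta> \<theta> \<theta>' =
     (SUP f\<in>{f \<in> borel_measurable M. \<forall>x\<in>space M. \<bar>f x\<bar> \<le> V x powr \<beta>}.
        SUP x\<in>space M.
          ennreal (\<bar>(\<integral>y. f y \<partial>P \<theta> x) - (\<integral>y. f y \<partial>P \<theta>' x)\<bar> / V x powr \<beta>))"

definition natural_filtration ::
  "'w measure \<Rightarrow> 'x measure \<Rightarrow> 't measure \<Rightarrow> (nat \<Rightarrow> 'w \<Rightarrow> 'x) \<Rightarrow> (nat \<Rightarrow> 'w \<Rightarrow> 't)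
     \<Rightarrow> nat \<Rightarrow> 'w measure" where
  "natural_filtration \<Omega> M T X \<theta> n =
     sigma (space \<Omega>)
       (\<Union>k\<in>{..n}. {(\<lambda>\<omega>. (X k \<omega>, \<theta> k \<omega>)) -` A \<inter> space \<Omega> | A. A \<in> sets (M \<Otimes>\<^sub>M T)})"

end

theory Submission
  imports Defs
begin

lemma summ_aux:
  fixes \<gamma> :: "nat \<Rightarrow> real"
  assumes "\<exists>\<alpha>>1/2. \<gamma> \<in> O(\<lambda>n. real n powr (-\<alpha>))"
  shows "summable (\<lambda>k. real (Suc k) powr (-1/2) * \<bar>\<gamma> (Suc k)\<bar>)"
proof -
  obtain \<alpha> where a: "\<alpha> > 1/2" and g: "\<gamma> \<in> O(\<lambda>n. real n powr (-\<alpha>))" using assms by blast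
  obtain c where c: "c > 0" and ev: "eventually (\<lambda>n. norm (\<gamma> n) \<le> c * norm (real n powr (-\<alpha>))) at_top"
    using g by (elim landau_o.bigE) auto
  have s0: "summable (\<lambda>n. real n powr (-(1/2+\<alpha>)))"
    using a by (subst summable_real_powr_iff) simp
  have s1: "summable (\<lambda>k. c * real (Suc k) powr (-(1/2+\<alpha>)))"
    using s0 by (subst summable_Suc_iff) (rule summable_mult)
  have ev2: "eventually (\<lambda>k. norm (real (Suc k) powr (-1/2) * \<bar>\<gamma> (Suc k)\<bar>) \<le> c * real (Suc k) powr (-(1/2+\<alpha>))) at_top"
  proof -
    from ev have "eventually (\<lambda>k. norm (\<gamma> (Suc k)) \<le> c * norm (real (Suc k) powr (-\<alpha>))) at_top"
      by (rule eventually_compose_filterlim[OF _ filterlim_Suc])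
    then show ?thesis
    proof eventually_elim
      case (elim k)
      have "norm (real (Suc k) powr (-1/2) * \<bar>\<gamma> (Suc k)\<bar>) = real (Suc k) powr (-1/2) * \<bar>\<gamma> (Suc k)\<bar>" by simp
      also have "\<dots> \<le> real (Suc k) powr (-1/2) * (c * real (Suc k) powr (-\<alpha>))"
        using elim by (intro mult_left_mono) auto
      also have "\<dots> = c * real (Suc k) powr (-(1/2+\<alpha>))"
      proof -
        have "real (Suc k) powr (-1/2) * real (Suc k) powr (-\<alpha>) = real (Suc k) powr (-1/2 + -\<alpha>)"
          by (rule powr_add[symmetric])
        also have "-1/2 + -\<alpha> = -(1/2+\<alpha>)" by simp
        finally show ?thesis by (simp add: mult.left_commute)
      qed
      finally show ?case .
    qed
  qed
  show ?thesis by (rule summable_comparison_test_ev[OF ev2 s1])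
qed

lemma Dbeta_sym: "Dbeta M P V b s t = Dbeta M P V b t s"
  unfolding Dbeta_def by (simp add: abs_minus_commute)

lemma nat_filt_subalg:
  assumes Xm: "\<And>n. X n \<in> \<Omega> \<rightarrow>\<^sub>M M" and tm: "\<And>n. \<theta> n \<in> \<Omega> \<rightarrow>\<^sub>M T"
  shows "subalgebra \<Omega> (natural_filtration \<Omega> M T X \<theta> n)"
proof -
  let ?G = "(\<Union>k\<in>{..n}. {(\<lambda>\<omega>. (X k \<omega>, \<theta> k \<omega>)) -` A \<inter> space \<Omega> | A. A \<in> sets (M \<Otimes>\<^sub>M T)})"
  have pm: "\<And>k. (\<lambda>\<omega>. (X k \<omega>, \<theta> k \<omega>)) \<in> \<Omega> \<rightarrow>\<^sub>M (M \<Otimes>\<^sub>M T)"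
    using Xm tm by (intro measurable_Pair) auto
  have G1: "?G \<subseteq> Pow (space \<Omega>)" by auto
  have G2: "?G \<subseteq> sets \<Omega>" using pm by (auto intro: measurable_sets)
  have "space (natural_filtration \<Omega> M T X \<theta> n) = space \<Omega>"
    unfolding natural_filtration_def using G1 by (simp add: space_measure_of_conv)
  moreover have "sets (natural_filtration \<Omega> M T X \<theta> n) \<subseteq> sets \<Omega>"
    unfolding natural_filtration_def using G1 G2
    by (simp add: sets_measure_of_conv sets.sigma_sets_subset)
  ultimately show ?thesis unfolding subalgebra_def by simp
qed

theorem proposition3p2:
  fixes M :: "'x measure" and T :: "'t measure" and \<pi> :: "'x measure"
    and P :: "'t \<Rightarrow> 'x \<Rightarrow> 'x measure"
    and \<mu> :: "('x \<times> 't) measure"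
    and \<Omega> :: "'w measure" and X :: "nat \<Rightarrow> 'w \<Rightarrow> 'x" and \<theta> :: "nat \<Rightarrow> 'w \<Rightarrow> 't"
    and V :: "'x \<Rightarrow> real" and \<gamma> :: "nat \<Rightarrow> real" and \<eta> :: real and \<beta> :: real
  assumes cg: "countably_generated M"
    and pi_prob: "prob_space \<pi>" and pi_sets: "sets \<pi> = sets M"
    and kern: "\<And>t. t \<in> space T \<Longrightarrow> markov_kernel M (P t)"
    and kern_meas: "\<And>x A. x \<in> space M \<Longrightarrow> A \<in> sets M \<Longrightarrow>
                       (\<lambda>t. emeasure (P t x) A) \<in> borel_measurable T"
    and invariant: "\<And>t. t \<in> space T \<Longrightarrow> \<pi> \<bind> P t = \<pi>"
    and Omega: "prob_space \<Omega>"
    and X_meas: "\<And>n. X n \<in> \<Omega> \<rightarrow>\<^sub>M M"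
    and theta_meas: "\<And>n. \<theta> n \<in> \<Omega> \<rightarrow>\<^sub>M T"
    and init: "distr \<Omega> (M \<Otimes>\<^sub>M T) (\<lambda>\<omega>. (X 0 \<omega>, \<theta> 0 \<omega>)) = \<mu>"
    and markov: "\<And>n f. f \<in> borel_measurable M \<Longrightarrow>
        AE \<omega> in \<Omega>. nn_cond_exp \<Omega> (natural_filtration \<Omega> M T X \<theta> n)
                       (\<lambda>\<omega>. f (X (Suc n) \<omega>)) \<omega>
                   = (\<integral>\<^sup>+ y. f y \<partial>P (\<theta> n \<omega>) (X n \<omega>))"
    \<comment> \<open>Assumption A1\<close>
    and A1_irred: "\<And>t. t \<in> space T \<Longrightarrow> phi_irreducible M (P t)"
    and A1_aper: "\<And>t. t \<in> space T \<Longrightarrow> aperiodic M (P t)"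
    and V_meas: "V \<in> borel_measurable M"
    and V_ge1: "\<And>x. x \<in> space M \<Longrightarrow> V x \<ge> 1"
    and V_init: "(\<integral>\<^sup>+ z. ennreal (V (fst z)) \<partial>\<mu>) < \<infinity>"
    and A1_geom: "\<And>b. b \<in> {0<..1} \<Longrightarrow> \<exists>\<rho> C. 0 < \<rho> \<and> \<rho> < 1 \<and>
        (\<forall>t\<in>space T. \<forall>x\<in>space M. \<forall>n.
           wnorm_diff M (\<lambda>y. V y powr b) (kpow M (P t) n x) \<pi> \<le> ennreal (C * \<rho> ^ n * V x powr b))"
    and A1_drift: "\<exists>(bd::real) lam. 0 < lam \<and> lam < 1 \<and>
        (\<forall>t\<in>space T. \<forall>x\<in>space M.
           (\<integral>\<^sup>+ y. ennreal (V y) \<partial>P t x) \<le> ennreal (lam * V x + bd))"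
    \<comment> \<open>Assumption A2\<close>
    and eta: "0 \<le> \<eta>" "\<eta> < 1/2"
    and gamma_pos: "\<And>n. n \<ge> 1 \<Longrightarrow> \<gamma> n > 0"
    and gamma_mono: "\<And>m n. 1 \<le> m \<Longrightarrow> m \<le> n \<Longrightarrow> \<gamma> n \<le> \<gamma> m"
    and gamma_rate: "\<exists>\<alpha>>1/2. \<gamma> \<in> O(\<lambda>n. real n powr (-\<alpha>))"
    and A2: "\<And>b. b \<in> {0..1} \<Longrightarrow> \<exists>C. AE \<omega> in \<Omega>. \<forall>n\<ge>1.
        Dbeta M P V b (\<theta> (n - 1) \<omega>) (\<theta> n \<omega>) \<le> ennreal (C * \<gamma> n * V (X n \<omega>) powr \<eta>)"
    and beta: "0 \<le> \<beta>" "\<beta> < 1/2"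
  shows "AE \<omega> in \<Omega>.
           (\<Sum>k. ennreal (real (Suc k) powr (-1/2)) * Dbeta M P V \<beta> (\<theta> (Suc k) \<omega>) (\<theta> k \<omega>)
                   * ennreal (V (X (Suc k) \<omega>) powr \<beta>)) < \<infinity>"
proof -
  interpret O: prob_space \<Omega> by (rule Omega)
  note [measurable] = X_meas theta_meas V_meas
  have Xsp: "\<And>n \<omega>. \<omega> \<in> space \<Omega> \<Longrightarrow> X n \<omega> \<in> space M" using measurable_space[OF X_meas] by blast
  have tsp: "\<And>n \<omega>. \<omega> \<in> space \<Omega> \<Longrightarrow> \<theta> n \<omega> \<in> space T" using measurable_space[OF theta_meas] by blast
  define E where "E n = (\<integral>\<^sup>+ \<omega>. ennreal (V (X n \<omega>)) \<partial>\<Omega>)" for n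
  obtain bd lam where lam: "0 < lam" "lam < 1" and drift:
    "\<And>t x. t\<in>space T \<Longrightarrow> x\<in>space M \<Longrightarrow> (\<integral>\<^sup>+ y. ennreal (V y) \<partial>P t x) \<le> ennreal (lam * V x + bd)"
    using A1_drift by blast
  define b' where "b' = max bd 0"
  have E0: "E 0 < \<infinity>"
  proof -
    have pm: "(\<lambda>\<omega>. (X 0 \<omega>, \<theta> 0 \<omega>)) \<in> \<Omega> \<rightarrow>\<^sub>M (M \<Otimes>\<^sub>M T)" by measurable
    have "(\<integral>\<^sup>+ z. ennreal (V (fst z)) \<partial>\<mu>) = E 0"
      unfolding init[symmetric] E_def by (subst nn_integral_distr[OF pm]) auto
    then show ?thesis using V_init by simp
  qed
  have step: "E (Suc n) \<le> ennreal lam * E n + ennreal b'" for n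
  proof -
    let ?F = "natural_filtration \<Omega> M T X \<theta> n"
    interpret S: finite_measure_subalgebra \<Omega> ?F
      by unfold_locales (rule nat_filt_subalg[OF X_meas theta_meas])
    have "E (Suc n) = (\<integral>\<^sup>+ \<omega>. 1 * ennreal (V (X (Suc n) \<omega>)) \<partial>\<Omega>)" unfolding E_def by simp
    also have "\<dots> = (\<integral>\<^sup>+ \<omega>. 1 * nn_cond_exp \<Omega> ?F (\<lambda>\<omega>. ennreal (V (X (Suc n) \<omega>))) \<omega> \<partial>\<Omega>)"
      by (rule S.nn_cond_exp_intg[symmetric]) auto
    also have "\<dots> = (\<integral>\<^sup>+ \<omega>. (\<integral>\<^sup>+ y. ennreal (V y) \<partial>P (\<theta> n \<omega>) (X n \<omega>)) \<partial>\<Omega>)"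
      using markov[of "\<lambda>y. ennreal (V y)" n] by (intro nn_integral_cong_AE) auto
    also have "\<dots> \<le> (\<integral>\<^sup>+ \<omega>. ennreal lam * ennreal (V (X n \<omega>)) + ennreal b' \<partial>\<Omega>)"
    proof (rule nn_integral_mono)
      fix \<omega> assume w: "\<omega> \<in> space \<Omega>"
      have "(\<integral>\<^sup>+ y. ennreal (V y) \<partial>P (\<theta> n \<omega>) (X n \<omega>)) \<le> ennreal (lam * V (X n \<omega>) + bd)"
        using drift tsp Xsp w by blast
      also have "\<dots> \<le> ennreal (lam * V (X n \<omega>) + b')" unfolding b'_def by (intro ennreal_leI) auto
      also have "\<dots> = ennreal lam * ennreal (V (X n \<omega>)) + ennreal b'"
        using lam V_ge1[OF Xsp[OF w, of n]] unfolding b'_def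
        by (subst ennreal_plus) (auto simp: ennreal_mult)
      finally show "(\<integral>\<^sup>+ y. ennreal (V y) \<partial>P (\<theta> n \<omega>) (X n \<omega>)) \<le> ennreal lam * ennreal (V (X n \<omega>)) + ennreal b'" .
    qed
    also have "\<dots> = ennreal lam * E n + ennreal b'"
      unfolding E_def by (simp add: nn_integral_add nn_integral_cmult O.emeasure_space_1)
    finally show ?thesis .
  qed
  define B where "B = max (enn2real (E 0)) (b' / (1 - lam))"
  have B0: "0 \<le> B" unfolding B_def by (simp add: max.coboundedI1)
  have Ebound: "E n \<le> ennreal B" for n
  proof (induction n)
    case 0
    have "E 0 = ennreal (enn2real (E 0))" using E0 by simp
    also have "\<dots> \<le> ennreal B" unfolding B_def by (intro ennreal_leI) simp
    finally show ?case .
  next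
    case (Suc n)
    have "E (Suc n) \<le> ennreal lam * E n + ennreal b'" by (rule step)
    also have "\<dots> \<le> ennreal lam * ennreal B + ennreal b'" using Suc by (intro add_mono mult_left_mono) auto
    also have "\<dots> = ennreal (lam * B + b')" using lam B0 unfolding b'_def
      by (subst ennreal_plus) (auto simp: ennreal_mult)
    also have "\<dots> \<le> ennreal B"
    proof (rule ennreal_leI)
      have "b' / (1 - lam) \<le> B" unfolding B_def by simp
      then have "b' \<le> B * (1 - lam)" using lam by (simp add: divide_le_eq)
      then show "lam * B + b' \<le> B" by (simp add: algebra_simps)
    qed
    finally show ?case .
  qed
  obtain C where C: "AE \<omega> in \<Omega>. \<forall>n\<ge>1.
        Dbeta M P V \<beta> (\<theta> (n - 1) \<omega>) (\<theta> n \<omega>) \<le> ennreal (C * \<gamma> n * V (X n \<omega>) powr \<eta>)"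
    using A2[of \<beta>] beta by auto
  define a where "a k = real (Suc k) powr (-1/2) * \<bar>\<gamma> (Suc k)\<bar> * \<bar>C\<bar>" for k
  have a0: "a k \<ge> 0" for k unfolding a_def by simp
  have suma: "summable a" unfolding a_def
    by (rule summable_mult2[OF summ_aux[OF gamma_rate]])
  define g where "g \<omega> = (\<Sum>k. ennreal (a k) * ennreal (V (X (Suc k) \<omega>)))" for \<omega>
  have gm: "g \<in> borel_measurable \<Omega>" unfolding g_def by measurable
  have "integral\<^sup>N \<Omega> g = (\<Sum>k. ennreal (a k) * E (Suc k))"
    unfolding g_def E_def by (simp add: nn_integral_suminf nn_integral_cmult)
  also have "\<dots> \<le> (\<Sum>k. ennreal (a k * B))"
  proof (intro suminf_le)
    fix k
    have "ennreal (a k) * E (Suc k) \<le> ennreal (a k) * ennreal B" by (intro mult_left_mono Ebound) simp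
    also have "\<dots> = ennreal (a k * B)" using a0 B0 by (simp add: ennreal_mult)
    finally show "ennreal (a k) * E (Suc k) \<le> ennreal (a k * B)" .
  qed auto
  also have "\<dots> = ennreal (\<Sum>k. a k * B)"
    using a0 B0 suma by (intro suminf_ennreal2) (auto intro: summable_mult2)
  finally have "integral\<^sup>N \<Omega> g \<noteq> \<infinity>" by (auto simp: top_unique)
  then have gfin: "AE \<omega> in \<Omega>. g \<omega> \<noteq> \<infinity>" by (rule nn_integral_PInf_AE[OF gm])
  show ?thesis
    using C gfin AE_space
  proof eventually_elim
    case (elim \<omega>)
    have "(\<Sum>k. ennreal (real (Suc k) powr (-1/2)) * Dbeta M P V \<beta> (\<theta> (Suc k) \<omega>) (\<theta> k \<omega>)
                   * ennreal (V (X (Suc k) \<omega>) powr \<beta>)) \<le> g \<omega>"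
      unfolding g_def
    proof (intro suminf_le)
      fix k
      have Vx: "V (X (Suc k) \<omega>) \<ge> 1" using V_ge1 Xsp elim(3) by blast
      have D: "Dbeta M P V \<beta> (\<theta> (Suc k) \<omega>) (\<theta> k \<omega>) \<le> ennreal (C * \<gamma> (Suc k) * V (X (Suc k) \<omega>) powr \<eta>)"
        using elim(1) by (subst Dbeta_sym) (drule spec[of _ "Suc k"], simp)
      also have "\<dots> \<le> ennreal (\<bar>C\<bar> * \<bar>\<gamma> (Suc k)\<bar> * V (X (Suc k) \<omega>) powr \<eta>)"
        by (intro ennreal_leI mult_right_mono) (auto simp: abs_mult[symmetric])
      finally have D2: "Dbeta M P V \<beta> (\<theta> (Suc k) \<omega>) (\<theta> k \<omega>) \<le> ennreal (\<bar>C\<bar> * \<bar>\<gamma> (Suc k)\<bar> * V (X (Suc k) \<omega>) powr \<eta>)" .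
      have pw: "V (X (Suc k) \<omega>) powr \<eta> * V (X (Suc k) \<omega>) powr \<beta> \<le> V (X (Suc k) \<omega>)"
      proof -
        have "V (X (Suc k) \<omega>) powr \<eta> * V (X (Suc k) \<omega>) powr \<beta> = V (X (Suc k) \<omega>) powr (\<eta> + \<beta>)"
          by (rule powr_add[symmetric])
        also have "\<dots> \<le> V (X (Suc k) \<omega>) powr 1" using Vx eta beta by (intro powr_mono) auto
        finally show ?thesis using Vx by simp
      qed
      have "ennreal (real (Suc k) powr (-1/2)) * Dbeta M P V \<beta> (\<theta> (Suc k) \<omega>) (\<theta> k \<omega>)
                   * ennreal (V (X (Suc k) \<omega>) powr \<beta>)
           \<le> ennreal (real (Suc k) powr (-1/2)) * ennreal (\<bar>C\<bar> * \<bar>\<gamma> (Suc k)\<bar> * V (X (Suc k) \<omega>) powr \<eta>)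
                   * ennreal (V (X (Suc k) \<omega>) powr \<beta>)"
        using D2 by (intro mult_right_mono mult_left_mono) auto
      also have "\<dots> = ennreal (real (Suc k) powr (-1/2) * (\<bar>C\<bar> * \<bar>\<gamma> (Suc k)\<bar> * V (X (Suc k) \<omega>) powr \<eta>)
                   * V (X (Suc k) \<omega>) powr \<beta>)"
        by (simp add: ennreal_mult)
      also have "\<dots> \<le> ennreal (a k * V (X (Suc k) \<omega>))"
      proof (rule ennreal_leI)
        have "real (Suc k) powr (-1/2) * (\<bar>C\<bar> * \<bar>\<gamma> (Suc k)\<bar> * V (X (Suc k) \<omega>) powr \<eta>)
                   * V (X (Suc k) \<omega>) powr \<beta> = a k * (V (X (Suc k) \<omega>) powr \<eta> * V (X (Suc k) \<omega>) powr \<beta>)"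
          unfolding a_def by (simp add: algebra_simps)
        also have "\<dots> \<le> a k * V (X (Suc k) \<omega>)" using pw a0 by (intro mult_left_mono) auto
        finally show "real (Suc k) powr (-1/2) * (\<bar>C\<bar> * \<bar>\<gamma> (Suc k)\<bar> * V (X (Suc k) \<omega>) powr \<eta>)
                   * V (X (Suc k) \<omega>) powr \<beta> \<le> a k * V (X (Suc k) \<omega>)" .
      qed
      also have "\<dots> = ennreal (a k) * ennreal (V (X (Suc k) \<omega>))" using a0[of k] Vx by (simp add: ennreal_mult)
      finally show "ennreal (real (Suc k) powr (-1/2)) * Dbeta M P V \<beta> (\<theta> (Suc k) \<omega>) (\<theta> k \<omega>)
                   * ennreal (V (X (Suc k) \<omega>) powr \<beta>) \<le> ennreal (a k) * ennreal (V (X (Suc k) \<omega>))" .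
    qed auto
    then show ?case using elim(2) by (simp add: top.not_eq_extremum le_less_trans)
  qed
qed

end
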